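(* For each $2$-cocycle $f = f_1 + f_2 + f_3 \in Z^2(\mathfrak{g},\mathfrak{z})$, there exists a decomposition $f_1 = f_1^0 + f_1^1$ into linear maps $f_1^0, f_1^1 \colon \Lambda^2(A) \otimes S^2(\mathfrak{k}) \to \mathfrak{z}$, where $$ f_1^0(\mathfrak{g},\mathfrak{g}') = \{0\}, \quad \operatorname{im}(\tilde f_1^1) \subseteq \operatorname{Sym}^2(\mathfrak{k},\mathfrak{z})^{\mathfrak{k}} \quad \mbox{ and } \quad T_0(A) \subseteq \ker \tilde f_1^1. $$
   Context: Let $A$ be a unital commutative associative algebra over a field $\mathbb{K}$ with $2 \in \mathbb{K}^\times$, $\mathfrak{k}$ a $\mathbb{K}$-Lie algebra, $\mathfrak{k}' := [\mathfrak{k},\mathfrak{k}]$, and $\mathfrak{g} := A \otimes \mathfrak{k}$ with bracket $[a \otimes x, a' \otimes x'] = aa' \otimes [x,x']$, so $\mathfrak{g}' = A \otimes \mathfrak{k}'$. Let $\mathfrak{z}$ be a vector space, viewed as a trivial $\mathfrak{g}$-module. Write $S^2(A) = (A \vee \mathbf{1}) \oplus I_A$, where $I_A$ is the kernel of the multiplication map $S^2(A) \to A$ and $A$ is identified with $A\vee\mathbf{1}$. There is a linear isomorphism $P=(p_1,p_2,p_3)\colon \Lambda^2(\mathfrak{g}) \to (\Lambda^2(A) \otimes S^2(\mathfrak{k})) \oplus (A \otimes \Lambda^2(\mathfrak{k})) \oplus (I_A \otimes \Lambda^2(\mathfrak{k}))$ with $p_1(ax\wedge by) = a\wedge b \otimes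 x\vee y$, $p_2(ax\wedge by) = ab\otimes x\wedge y$, $p_3(ax\wedge by) = (a\vee b - ab\vee \mathbf{1})\otimes x\wedge y$. Every alternating bilinear map $f\colon \Lambda^2(\mathfrak{g}) \to \mathfrak{z}$ is written $f = f_1\circ p_1 + f_2\circ p_2 + f_3 \circ p_3$ (abbreviated $f = f_1+f_2+f_3$) with linear maps $f_1 \colon \Lambda^2(A)\otimes S^2(\mathfrak{k}) \to \mathfrak{z}$, $f_2\colon A\otimes \Lambda^2(\mathfrak{k})\to\mathfrak{z}$, $f_3 \colon I_A\otimes\Lambda^2(\mathfrak{k})\to\mathfrak{z}$. For such a map $g$ on $\Lambda^2(A)\otimes S^2(\mathfrak{k})$, $\tilde g \colon A\times A \to \operatorname{Sym}^2(\mathfrak{k},\mathfrak{z})$ denotes the alternating map $\tilde g(a,b)(x,y) := g(a\wedge b\otimes x\vee y)$. $\operatorname{Sym}^2(\mathfrak{k},\mathfrak{z})^{\mathfrak{k}}$ is the space of invariant symmetric $\mathfrak{z}$-valued bilinear maps on $\mathfrak{k}$, and $T_0(A) := \operatorname{span}\{ab\wedge c + bc\wedge a + ca\wedge b - abc\wedge \mathbf{1} : a,b,c\in A\} \subseteq \Lambda^2(A)$. The condition $f_1^0(\mathfrak{g},\mathfrak{g}')=\{0\}$ means that $f_1^0\circ p_1$ vanishes on $\mathfrak{g}\times\mathfrak{g}'$. *)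

theory Defs
  imports Main "HOL.Vector_Spaces"
begin

text \<open>Linearity in each of four arguments (a 4-linear map).  A linear map on a
tensor product of four spaces is encoded by its universal property as such a map.\<close>
definition quadlinear ::
  "('k::field \<Rightarrow> 'a::ab_group_add \<Rightarrow> 'a) \<Rightarrow> ('k \<Rightarrow> 'b::ab_group_add \<Rightarrow> 'b) \<Rightarrow> ('k \<Rightarrow> 'c::ab_group_add \<Rightarrow> 'c) \<Rightarrow> ('k \<Rightarrow> 'd::ab_group_add \<Rightarrow> 'd)
    \<Rightarrow> ('k \<Rightarrow> 'z::ab_group_add \<Rightarrow> 'z) \<Rightarrow> ('a \<Rightarrow> 'b \<Rightarrow> 'c \<Rightarrow> 'd \<Rightarrow> 'z) \<Rightarrow> bool" where
  "quadlinear s1 s2 s3 s4 t F \<longleftrightarrow>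
     (\<forall>b c d. Vector_Spaces.linear s1 t (\<lambda>a. F a b c d)) \<and>
     (\<forall>a c d. Vector_Spaces.linear s2 t (\<lambda>b. F a b c d)) \<and>
     (\<forall>a b d. Vector_Spaces.linear s3 t (\<lambda>c. F a b c d)) \<and>
     (\<forall>a b c. Vector_Spaces.linear s4 t (\<lambda>d. F a b c d))"

definition trilinear ::
  "('k::field \<Rightarrow> 'a::ab_group_add \<Rightarrow> 'a) \<Rightarrow> ('k \<Rightarrow> 'b::ab_group_add \<Rightarrow> 'b) \<Rightarrow> ('k \<Rightarrow> 'c::ab_group_add \<Rightarrow> 'c)
    \<Rightarrow> ('k \<Rightarrow> 'z::ab_group_add \<Rightarrow> 'z) \<Rightarrow> ('a \<Rightarrow> 'b \<Rightarrow> 'c \<Rightarrow> 'z) \<Rightarrow> bool" where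
  "trilinear s1 s2 s3 t F \<longleftrightarrow>
     (\<forall>b c. Vector_Spaces.linear s1 t (\<lambda>a. F a b c)) \<and>
     (\<forall>a c. Vector_Spaces.linear s2 t (\<lambda>b. F a b c)) \<and>
     (\<forall>a b. Vector_Spaces.linear s3 t (\<lambda>c. F a b c))"

text \<open>A unital commutative associative K-algebra: the ring structure is the type's
  comm_ring_1 structure, sA is the scalar multiplication.\<close>
definition comm_algebra :: "('k::field \<Rightarrow> 'a::comm_ring_1 \<Rightarrow> 'a) \<Rightarrow> bool" where
  "comm_algebra sA \<longleftrightarrow> vector_space sA \<and> (\<forall>c a b. sA c (a * b) = sA c a * b)"

definition lie_algebra :: "('k::field \<Rightarrow> 'l::ab_group_add \<Rightarrow> 'l) \<Rightarrow> ('l \<Rightarrow> 'l \<Rightarrow> 'l) \<Rightarrow> bool" where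
  "lie_algebra sL br \<longleftrightarrow> vector_space sL \<and>
     (\<forall>y. Vector_Spaces.linear sL sL (\<lambda>x. br x y)) \<and>
     (\<forall>x. Vector_Spaces.linear sL sL (\<lambda>y. br x y)) \<and>
     (\<forall>x. br x x = 0) \<and>
     (\<forall>x y z. br x (br y z) + br y (br z x) + br z (br x y) = 0)"

definition derived_algebra :: "('k::field \<Rightarrow> 'l::ab_group_add \<Rightarrow> 'l) \<Rightarrow> ('l \<Rightarrow> 'l \<Rightarrow> 'l) \<Rightarrow> 'l set" where
  "derived_algebra sL br = module.span sL {br x y | x y. True}"

definition invariant_form :: "('l \<Rightarrow> 'l \<Rightarrow> 'l) \<Rightarrow> ('l \<Rightarrow> 'l \<Rightarrow> 'z::ab_group_add) \<Rightarrow> bool" where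
  "invariant_form br \<beta> \<longleftrightarrow> (\<forall>w x y. \<beta> (br w x) y + \<beta> x (br w y) = 0)"

end

theory Submission
  imports Defs
begin


lemma lin_add: "Vector_Spaces.linear s1 s2 f \<Longrightarrow> f (x + y) = f x + f y"
  by (simp add: linear_iff)
lemma lin_zero: "Vector_Spaces.linear s1 s2 f \<Longrightarrow> f 0 = 0"
  by (metis module_hom.zero linear_iff_module_hom)
lemma lin_neg: "Vector_Spaces.linear s1 s2 f \<Longrightarrow> f (- x) = - f x"
  by (metis module_hom.neg linear_iff_module_hom)
lemma lin_diff: "Vector_Spaces.linear s1 s2 f \<Longrightarrow> f (x - y) = f x - f y"
  by (metis module_hom.diff linear_iff_module_hom)
lemma lin_sub:
  assumes "Vector_Spaces.linear s1 s2 f" "Vector_Spaces.linear s1 s2 g"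
  shows "Vector_Spaces.linear s1 s2 (\<lambda>x. f x - g x)"
proof -
  have "vector_space s2" using assms by (simp add: linear_iff)
  interpret vector_space s2 by fact
  show ?thesis using assms by (simp add: linear_iff scale_right_diff_distrib algebra_simps)
qed
lemma lin_comp: "Vector_Spaces.linear s1 s2 f \<Longrightarrow> Vector_Spaces.linear s2 s3 g \<Longrightarrow>
   Vector_Spaces.linear s1 s3 (\<lambda>x. g (f x))"
  using Vector_Spaces.linear_compose[of s1 s2 f s3 g] by (simp add: comp_def)

lemma lin_addf:
  assumes "Vector_Spaces.linear s1 s2 f" "Vector_Spaces.linear s1 s2 g"
  shows "Vector_Spaces.linear s1 s2 (\<lambda>x. f x + g x)"
proof -
  have "vector_space s2" using assms by (simp add: linear_iff)
  interpret vector_space s2 by fact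
  show ?thesis using assms by (simp add: linear_iff scale_right_distrib algebra_simps)
qed

lemma two_zero:
  fixes sZ :: "'k::field \<Rightarrow> 'z::ab_group_add \<Rightarrow> 'z"
  and v :: 'z
  assumes "vector_space sZ" "(2::'k) \<noteq> 0" "v + v = 0"
  shows "v = 0"
proof -
  interpret vector_space sZ by fact
  have "sZ 2 v = sZ (1 + 1) v" by simp
  also have "\<dots> = v + v" by (simp only: scale_left_distrib scale_one)
  finally have "sZ 2 v = 0" using assms(3) by simp
  then show ?thesis using assms(2) by simp
qed

theorem corollary3p5:
  fixes sA :: "'k::field \<Rightarrow> 'a::comm_ring_1 \<Rightarrow> 'a"
    and sL :: "'k \<Rightarrow> 'l::ab_group_add \<Rightarrow> 'l"
    and br :: "'l \<Rightarrow> 'l \<Rightarrow> 'l"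
    and sZ :: "'k \<Rightarrow> 'z::ab_group_add \<Rightarrow> 'z"
    and f :: "'a \<Rightarrow> 'l \<Rightarrow> 'a \<Rightarrow> 'l \<Rightarrow> 'z"
    and f1 :: "'a \<Rightarrow> 'a \<Rightarrow> 'l \<Rightarrow> 'l \<Rightarrow> 'z"
    and f2 :: "'a \<Rightarrow> 'l \<Rightarrow> 'l \<Rightarrow> 'z"
    and f3 :: "'a \<Rightarrow> 'a \<Rightarrow> 'l \<Rightarrow> 'l \<Rightarrow> 'z"
  assumes two: "(2::'k) \<noteq> 0"
    and A: "comm_algebra sA"
    and L: "lie_algebra sL br"
    and Z: "vector_space sZ"
    \<comment> \<open>f(a x, b y): an alternating bilinear map on g = A \<otimes> k\<close>
    and f_lin: "quadlinear sA sL sA sL sZ f"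
    and f_skew: "\<And>a x b y. f a x b y + f b y a x = 0"
    and f_alt: "\<And>a x. f a x a x = 0"
    \<comment> \<open>2-cocycle condition for the trivial module z\<close>
    and f_cocycle: "\<And>a b c x y z.
          f (a * b) (br x y) c z + f (b * c) (br y z) a x + f (c * a) (br z x) b y = 0"
    \<comment> \<open>f1 : \<Lambda>^2(A) \<otimes> S^2(k) \<rightarrow> z\<close>
    and f1_lin: "quadlinear sA sA sL sL sZ f1"
    and f1_alt: "\<And>a x y. f1 a a x y = 0"
    and f1_sym: "\<And>a b x y. f1 a b x y = f1 a b y x"
    \<comment> \<open>f2 : A \<otimes> \<Lambda>^2(k) \<rightarrow> z\<close>
    and f2_lin: "trilinear sA sL sL sZ f2"
    and f2_alt: "\<And>a x. f2 a x x = 0"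
    \<comment> \<open>f3 : I_A \<otimes> \<Lambda>^2(k) \<rightarrow> z, given as the restriction of a linear map on S^2(A) \<otimes> \<Lambda>^2(k)\<close>
    and f3_lin: "quadlinear sA sA sL sL sZ f3"
    and f3_sym: "\<And>a b x y. f3 a b x y = f3 b a x y"
    and f3_alt: "\<And>a b x. f3 a b x x = 0"
    \<comment> \<open>f = f1 \<circ> p1 + f2 \<circ> p2 + f3 \<circ> p3\<close>
    and decomp: "\<And>a b x y. f a x b y = f1 a b x y + f2 (a * b) x y + (f3 a b x y - f3 (a * b) 1 x y)"
  shows "\<exists>f10 f11 :: 'a \<Rightarrow> 'a \<Rightarrow> 'l \<Rightarrow> 'l \<Rightarrow> 'z.
     quadlinear sA sA sL sL sZ f10 \<and> (\<forall>a x y. f10 a a x y = 0) \<and> (\<forall>a b x y. f10 a b x y = f10 a b y x) \<and>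
     quadlinear sA sA sL sL sZ f11 \<and> (\<forall>a x y. f11 a a x y = 0) \<and> (\<forall>a b x y. f11 a b x y = f11 a b y x) \<and>
     (\<forall>a b x y. f1 a b x y = f10 a b x y + f11 a b x y) \<and>
     (\<forall>a b x y. y \<in> derived_algebra sL br \<longrightarrow> f10 a b x y = 0) \<and>
     (\<forall>a b. invariant_form br (f11 a b)) \<and>
     (\<forall>a b c x y. f11 (a * b) c x y + f11 (b * c) a x y + f11 (c * a) b x y - f11 (a * b * c) 1 x y = 0)"
  proof -
  interpret Lv: vector_space sL using L by (simp add: lie_algebra_def)
  interpret Zv: vector_space sZ by (rule Z)
  interpret LL: vector_space_pair sL sL by unfold_locales
  interpret LZ: vector_space_pair sL sZ by unfold_locales
  have br1: "\<And>y. Vector_Spaces.linear sL sL (\<lambda>x. br x y)"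
   and br2: "\<And>x. Vector_Spaces.linear sL sL (\<lambda>y. br x y)"
   and bralt: "\<And>x. br x x = 0" using L unfolding lie_algebra_def by auto
  have f1l1: "\<And>b c d. Vector_Spaces.linear sA sZ (\<lambda>a. f1 a b c d)"
   and f1l2: "\<And>a c d. Vector_Spaces.linear sA sZ (\<lambda>b. f1 a b c d)"
   and f1l3: "\<And>a b d. Vector_Spaces.linear sL sZ (\<lambda>c. f1 a b c d)"
   and f1l4: "\<And>a b c. Vector_Spaces.linear sL sZ (\<lambda>d. f1 a b c d)"
    using f1_lin unfolding quadlinear_def by auto
  have br_anti: "br x y = - br y x" for x y
  proof -
    have "0 = br (x + y) (x + y)" using bralt by simp
    also have "\<dots> = br x y + br y x"
      by (simp only: lin_add[OF br1] lin_add[OF br2]) (simp add: bralt)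
    finally show ?thesis by (metis eq_neg_iff_add_eq_0)
  qed
  have f1_anti: "f1 b a x y = - f1 a b x y" for a b x y
  proof -
    have "0 = f1 (a + b) (a + b) x y" using f1_alt by simp
    also have "\<dots> = f1 a b x y + f1 b a x y"
      by (simp only: lin_add[OF f1l1] lin_add[OF f1l2]) (simp add: f1_alt)
    finally show ?thesis by (metis eq_neg_iff_add_eq_0 add.commute)
  qed
  have I1: "f1 a b (br z x) y = f1 a b (br y z) x" for a b x y z
  proof -
    have h1: "f (a * b) (br x y) 1 z + f (b * 1) (br y z) a x + f (1 * a) (br z x) b y = 0"
      by (rule f_cocycle)
    have h2: "f (b * a) (br x y) 1 z + f (a * 1) (br y z) b x + f (1 * b) (br z x) a y = 0"
      by (rule f_cocycle)
    have an: "\<And>u v. f1 b a u v = - f1 a b u v" by (rule f1_anti)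
    have "(f1 a b (br z x) y - f1 a b (br y z) x) + (f1 a b (br z x) y - f1 a b (br y z) x) =
      (f (a * b) (br x y) 1 z + f (b * 1) (br y z) a x + f (1 * a) (br z x) b y) -
      (f (b * a) (br x y) 1 z + f (a * 1) (br y z) b x + f (1 * b) (br z x) a y)"
      by (simp add: decomp an algebra_simps f3_sym)
    also have "\<dots> = 0" using h1 h2 by simp
    finally have "(f1 a b (br z x) y - f1 a b (br y z) x) + (f1 a b (br z x) y - f1 a b (br y z) x) = 0" .
    then have "f1 a b (br z x) y - f1 a b (br y z) x = 0" by (rule two_zero[OF Z two])
    then show ?thesis by simp
  qed
  have inv: "f1 a b (br w x) y + f1 a b x (br w y) = 0" for a b w x y
  proof -
    have "f1 a b (br w x) y = f1 a b (br y w) x" by (rule I1)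
    also have "\<dots> = f1 a b x (br y w)" by (rule f1_sym)
    also have "\<dots> = - f1 a b x (br w y)" by (simp add: br_anti[of y w] lin_neg[OF f1l4])
    finally show ?thesis by simp
  qed
  have I3: "f3 a b (br x y) z = f3 (a * b) 1 (br x y) z" for a b x y z
  proof -
    define \<omega> where "\<omega> u v = f3 a b u v - f3 (a * b) 1 u v" for u v
    have c: "\<omega> (br y z) x + \<omega> (br z x) y = 0" for x y z
    proof -
      have h1: "f (a * b) (br x y) 1 z + f (b * 1) (br y z) a x + f (1 * a) (br z x) b y = 0"
        by (rule f_cocycle)
      have h2: "f ((a * b) * 1) (br x y) 1 z + f (1 * 1) (br y z) (a * b) x + f (1 * (a * b)) (br z x) 1 y = 0"
        by (rule f_cocycle)
      have an1: "\<And>u v. f1 b a u v = - f1 a b u v" by (rule f1_anti)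
      have an2: "\<And>u v. f1 1 (a * b) u v = - f1 (a * b) 1 u v" by (rule f1_anti)
      have r1: "f1 a b (br z x) y = f1 a b (br y z) x" by (rule I1)
      have r2: "f1 (a * b) 1 (br z x) y = f1 (a * b) 1 (br y z) x" by (rule I1)
      have "\<omega> (br y z) x + \<omega> (br z x) y =
        (f (a * b) (br x y) 1 z + f (b * 1) (br y z) a x + f (1 * a) (br z x) b y) -
        (f ((a * b) * 1) (br x y) 1 z + f (1 * 1) (br y z) (a * b) x + f (1 * (a * b)) (br z x) 1 y)"
        by (simp add: decomp an1 an2 r1 r2 \<omega>_def algebra_simps f3_sym)
      also have "\<dots> = 0" using h1 h2 by simp
      finally show ?thesis .
    qed
    have "\<omega> (br x y) z + \<omega> (br x y) z = 0"
    proof -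
      have "\<omega> (br x y) z + \<omega> (br x y) z =
        (\<omega> (br x y) z + \<omega> (br y z) x) + (\<omega> (br z x) y + \<omega> (br x y) z) - (\<omega> (br y z) x + \<omega> (br z x) y)"
        by (simp add: algebra_simps)
      also have "\<dots> = 0" using c[of z x y] c[of y z x] c[of x y z] by simp
      finally show ?thesis .
    qed
    then have "\<omega> (br x y) z = 0" by (rule two_zero[OF Z two])
    then show ?thesis unfolding \<omega>_def by simp
  qed
  have I4: "f1 (a * b) c (br x y) z + f1 (b * c) a (br x y) z + f1 (c * a) b (br x y) z
      - f1 (a * b * c) 1 (br x y) z = 0" for a b c x y z
  proof -
    have h1: "f (a * b) (br x y) c z + f (b * c) (br y z) a x + f (c * a) (br z x) b y = 0"
      by (rule f_cocycle)
    have h2: "f ((a * b * c) * 1) (br x y) 1 z + f (1 * 1) (br y z) (a * b * c) x + f (1 * (a * b * c)) (br z x) 1 y = 0"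
      by (rule f_cocycle)
    have an2: "\<And>u v. f1 1 (a * b * c) u v = - f1 (a * b * c) 1 u v" by (rule f1_anti)
    have r1: "f1 (b * c) a (br y z) x = f1 (b * c) a (br x y) z" using I1[of "b * c" a x y z] I1[of "b * c" a z x y] by simp
    have r2: "f1 (c * a) b (br z x) y = f1 (c * a) b (br x y) z" using I1[of "c * a" b x y z] I1[of "c * a" b z x y] by simp
    have r3: "f1 (a * b * c) 1 (br z x) y = f1 (a * b * c) 1 (br x y) z" using I1[of "a * b * c" 1 x y z] I1[of "a * b * c" 1 z x y] by simp
    have r4: "f1 (a * b * c) 1 (br y z) x = f1 (a * b * c) 1 (br x y) z" using I1[of "a * b * c" 1 x y z] I1[of "a * b * c" 1 z x y] by simp
    have t1: "f3 (a * b) c (br x y) z = f3 (a * b * c) 1 (br x y) z" by (rule I3)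
    have t2: "f3 (b * c) a (br y z) x = f3 (a * b * c) 1 (br y z) x" using I3[of "b * c" a y z x] by (simp add: mult_ac)
    have t3: "f3 (c * a) b (br z x) y = f3 (a * b * c) 1 (br z x) y" using I3[of "c * a" b z x y] by (simp add: mult_ac)
    have e: "b * c * a = a * b * c" "c * a * b = a * b * c" "a * b * c * 1 = a * b * c" "1 * (a * b * c) = a * b * c" "1 * 1 = (1::'a)" "1 * (a * b * c) * 1 = a * b * c"
      by (simp_all add: mult_ac)
    have "f1 (a * b) c (br x y) z + f1 (b * c) a (br x y) z + f1 (c * a) b (br x y) z
      - f1 (a * b * c) 1 (br x y) z =
      (f (a * b) (br x y) c z + f (b * c) (br y z) a x + f (c * a) (br z x) b y) -
      (f ((a * b * c) * 1) (br x y) 1 z + f (1 * 1) (br y z) (a * b * c) x + f (1 * (a * b * c)) (br z x) 1 y)"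
      by (simp only: decomp an2 r1 r2 r3 r4 t1 t2 t3 e) (simp add: algebra_simps f3_sym)
    also have "\<dots> = 0" using h1 h2 by simp
    finally show ?thesis .
  qed
  define D where "D = derived_algebra sL br"
  have D_span: "D = Lv.span {br x y | x y. True}" unfolding D_def derived_algebra_def by simp
  have D_sub: "Lv.subspace D" unfolding D_span by simp
  have brD: "br x y \<in> D" for x y unfolding D_span by (rule Lv.span_base) blast
  obtain B0 where B0: "B0 \<subseteq> D" "Lv.independent B0" "D \<subseteq> Lv.span B0"
    using Lv.maximal_independent_subset by blast
  define B1 where "B1 = Lv.extend_basis B0"
  have B1: "Lv.independent B1" "B0 \<subseteq> B1" "Lv.span B1 = UNIV"
    unfolding B1_def using B0(2) Lv.independent_extend_basis Lv.extend_basis_superset Lv.span_extend_basis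
    by auto
  define \<pi> where "\<pi> = LL.construct B1 (\<lambda>b. if b \<in> B0 then 0 else b)"
  have \<pi>l: "Vector_Spaces.linear sL sL \<pi>" unfolding \<pi>_def by (rule LL.linear_construct[OF B1(1)])
  have \<pi>B0: "\<pi> b = 0" if "b \<in> B0" for b
    unfolding \<pi>_def using LL.construct_basis[OF B1(1)] that B1(2) by auto
  have \<pi>D: "\<pi> d = 0" if "d \<in> D" for d
  proof -
    have "d \<in> Lv.span B0" using that B0(3) by blast
    then show ?thesis using LL.linear_eq_0_on_span[OF \<pi>l] \<pi>B0 by blast
  qed
  have \<pi>0: "\<pi> 0 = 0" by (rule lin_zero[OF \<pi>l])
  have idl: "Vector_Spaces.linear sL sL (\<lambda>x. x - \<pi> x)"
    by (rule lin_sub[OF Lv.linear_id[unfolded id_def] \<pi>l])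
  have dD: "x - \<pi> x \<in> D" for x
  proof -
    have img: "(\<lambda>x. x - \<pi> x) ` B1 \<subseteq> D"
    proof
      fix v assume "v \<in> (\<lambda>x. x - \<pi> x) ` B1"
      then obtain b where b: "b \<in> B1" "v = b - \<pi> b" by blast
      show "v \<in> D"
      proof (cases "b \<in> B0")
        case True then show ?thesis using b \<pi>B0 B0(1) by auto
      next
        case False
        have "\<pi> b = b" unfolding \<pi>_def using LL.construct_basis[OF B1(1) b(1)] False by simp
        then show ?thesis using b Lv.subspace_0[OF D_sub] by simp
      qed
    qed
    have "x - \<pi> x \<in> (\<lambda>x. x - \<pi> x) ` Lv.span B1" using B1(3) by simp
    also have "\<dots> = Lv.span ((\<lambda>x. x - \<pi> x) ` B1)" by (rule LL.linear_span_image[OF idl, symmetric])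
    also have "\<dots> \<subseteq> D" using img D_sub by (rule Lv.span_minimal)
    finally show ?thesis .
  qed
  define f10 where "f10 a b x y = f1 a b (\<pi> x) (\<pi> y)" for a b x y
  define f11 where "f11 a b x y = f1 a b x y - f10 a b x y" for a b x y
  have S0: "f1 (a * b) c u v + f1 (b * c) a u v + f1 (c * a) b u v - f1 (a * b * c) 1 u v = 0"
    if "u \<in> D" for a b c u v
  proof -
    have lS: "Vector_Spaces.linear sL sZ (\<lambda>u. f1 (a * b) c u v + f1 (b * c) a u v + f1 (c * a) b u v - f1 (a * b * c) 1 u v)"
      by (intro lin_sub lin_addf f1l3)
    have "u \<in> Lv.span {br x y | x y. True}" using that D_span by simp
    moreover have "\<And>w. w \<in> {br x y | x y. True} \<Longrightarrow>
       f1 (a * b) c w v + f1 (b * c) a w v + f1 (c * a) b w v - f1 (a * b * c) 1 w v = 0"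
      using I4 by blast
    ultimately show ?thesis
      using LZ.linear_eq_0_on_span[OF lS] by blast
  qed
  have f11e: "f11 p q x y = f1 p q (x - \<pi> x) y + f1 p q (y - \<pi> y) (\<pi> x)" for p q x y
    unfolding f11_def f10_def
    by (simp add: lin_diff[OF f1l3] lin_diff[OF f1l4] f1_sym[of p q _ "\<pi> x"])
  have ql10: "quadlinear sA sA sL sL sZ f10"
    unfolding quadlinear_def f10_def
    by (intro conjI allI f1l1 f1l2 lin_comp[OF \<pi>l f1l3] lin_comp[OF \<pi>l f1l4])
  have ql11: "quadlinear sA sA sL sL sZ f11"
    using ql10 f1_lin unfolding quadlinear_def f11_def by (intro conjI allI lin_sub) auto
  show ?thesis
  proof (intro exI conjI allI impI)
    show "quadlinear sA sA sL sL sZ f10" by (rule ql10)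
    show "quadlinear sA sA sL sL sZ f11" by (rule ql11)
    show "f10 a a x y = 0" for a x y unfolding f10_def by (rule f1_alt)
    show "f10 a b x y = f10 a b y x" for a b x y unfolding f10_def by (rule f1_sym)
    show "f11 a a x y = 0" for a x y unfolding f11_def f10_def by (simp add: f1_alt)
    show "f11 a b x y = f11 a b y x" for a b x y unfolding f11_def f10_def by (metis f1_sym)
    show "f1 a b x y = f10 a b x y + f11 a b x y" for a b x y unfolding f11_def by simp
    show "f10 a b x y = 0" if "y \<in> derived_algebra sL br" for a b x y
      using that \<pi>D lin_zero[OF f1l4] unfolding f10_def D_def by simp
    show "invariant_form br (f11 a b)" for a b
      unfolding invariant_form_def f11_def f10_def
      using inv \<pi>D[OF brD] lin_zero[OF f1l3] lin_zero[OF f1l4] by (simp add: algebra_simps)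
    show "f11 (a * b) c x y + f11 (b * c) a x y + f11 (c * a) b x y - f11 (a * b * c) 1 x y = 0" for a b c x y
      unfolding f11e using S0[OF dD, of a b c x y] S0[OF dD, of a b c y "\<pi> x"]
      by (simp add: algebra_simps)
  qed
qed

end
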